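(* Suppose $\alpha+\beta=-1$. Then for every $n\ge1$, writing $\Delta=(u_3+u_4)^2-4u_1u_2$, $$2^nP_n(u_1,u_2,u_3,u_4\mid\alpha,\beta)=\sum_{k=0}^{\lfloor n/2\rfloor}\binom{n}{2k}\Delta^k(\beta-\alpha)^{n-2k}(u_3-u_4)^{n-2k}-(u_3+u_4)\sum_{k=0}^{\lfloor n/2\rfloor}\binom{n}{2k+1}\Delta^k(\beta-\alpha)^{n-2k-1}(u_3-u_4)^{n-2k-1}.$$
   Context: For $\sigma=\sigma_1\cdots\sigma_m\in\mathfrak S_m$: ${\rm LRmax}(\sigma)$ is the number of $i$ with $\sigma_j<\sigma_i$ for all $j<i$; ${\rm RLmax}(\sigma)$ is the number of $i$ with $\sigma_j<\sigma_i$ for all $j>i$. With the convention $\sigma_0=\sigma_{m+1}=0$: ${\rm W}(\sigma)$ is the number of $i\in[m]$ with $\sigma_{i-1}<\sigma_i>\sigma_{i+1}$; ${\rm V}(\sigma)$ is the number of $i$ with $1<i<m$ and $\sigma_{i-1}>\sigma_i<\sigma_{i+1}$; ${\rm rdd}(\sigma)$ is the number of $i$ with $1<i\le m$ and $\sigma_{i-1}>\sigma_i>\sigma_{i+1}$; ${\rm lda}(\sigma)$ is the number of $i$ with $1\le i<m$ and $\sigma_{i-1}<\sigma_i<\sigma_{i+1}$. Define $$P_n(u_1,u_2,u_3,u_4\mid\alpha,\beta)=\sum_{\sigma\in\mathfrak S_{n+1}}u_1^{{\rm V}(\sigma)}u_2^{{\rm W}(\sigma)-1}u_3^{{\rm rdd}(\sigma)}u_4^{{\rm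 lda}(\sigma)}\alpha^{{\rm LRmax}(\sigma)-1}\beta^{{\rm RLmax}(\sigma)-1}.$$ Convention $0^0=1$. *)

theory Defs
  imports Main
begin

text \<open>A permutation of [m] is a list of the distinct values 1..m (one-line notation).
  The entry at position i (1-based) is sig xs i, with the convention sigma_0 = sigma_(m+1) = 0.\<close>

definition perms :: "nat \<Rightarrow> nat list set" where
  "perms m = {xs. distinct xs \<and> set xs = {1..m}}"

definition sig :: "nat list \<Rightarrow> nat \<Rightarrow> nat" where
  "sig xs i = (if 1 \<le> i \<and> i \<le> length xs then xs ! (i - 1) else 0)"

definition LRmax :: "nat list \<Rightarrow> nat" where
  "LRmax xs = card {i \<in> {1..length xs}. \<forall>j \<in> {1..<i}. sig xs j < sig xs i}"

definition RLmax :: "nat list \<Rightarrow> nat" where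
  "RLmax xs = card {i \<in> {1..length xs}. \<forall>j \<in> {i<..length xs}. sig xs j < sig xs i}"

definition Wst :: "nat list \<Rightarrow> nat" where
  "Wst xs = card {i \<in> {1..length xs}. sig xs (i - 1) < sig xs i \<and> sig xs i > sig xs (i + 1)}"

definition Vst :: "nat list \<Rightarrow> nat" where
  "Vst xs = card {i. 1 < i \<and> i < length xs \<and> sig xs (i - 1) > sig xs i \<and> sig xs i < sig xs (i + 1)}"

definition rdd :: "nat list \<Rightarrow> nat" where
  "rdd xs = card {i. 1 < i \<and> i \<le> length xs \<and> sig xs (i - 1) > sig xs i \<and> sig xs i > sig xs (i + 1)}"

definition lda :: "nat list \<Rightarrow> nat" where
  "lda xs = card {i. 1 \<le> i \<and> i < length xs \<and> sig xs (i - 1) < sig xs i \<and> sig xs i < sig xs (i + 1)}"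

definition Pn :: "nat \<Rightarrow> 'a::comm_ring_1 \<Rightarrow> 'a \<Rightarrow> 'a \<Rightarrow> 'a \<Rightarrow> 'a \<Rightarrow> 'a \<Rightarrow> 'a" where
  "Pn n u1 u2 u3 u4 \<alpha> \<beta> = (\<Sum>xs \<in> perms (n + 1).
      u1 ^ Vst xs * u2 ^ (Wst xs - 1) * u3 ^ rdd xs * u4 ^ lda xs
      * \<alpha> ^ (LRmax xs - 1) * \<beta> ^ (RLmax xs - 1))"

end

theory Submission
  imports Defs "HOL-Computational_Algebra.Polynomial"
begin


datatype 'a dual = Dual (re: 'a) (ep: 'a)

instantiation dual :: (comm_ring_1) comm_ring_1
begin
definition "0 = Dual 0 0"
definition "1 = Dual 1 0"
definition "x + y = Dual (re x + re y) (ep x + ep y)"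
definition "x - y = Dual (re x - re y) (ep x - ep y)"
definition "- x = Dual (- re x) (- ep x)"
definition "x * y = Dual (re x * re y) (re x * ep y + ep x * re y)"
instance
  by standard (auto simp: zero_dual_def one_dual_def plus_dual_def minus_dual_def
      uminus_dual_def times_dual_def algebra_simps intro: dual.expand)
end

lemma dual_simps [simp]:
  "re 0 = 0" "ep 0 = 0" "re 1 = 1" "ep 1 = 0"
  "re (x + y) = re x + re y" "ep (x + y) = ep x + ep y"
  "re (x - y) = re x - re y" "ep (x - y) = ep x - ep y"
  "re (- x) = - re x" "ep (- x) = - ep x"
  "re (x * y) = re x * re y" "ep (x * y) = re x * ep y + ep x * re y"
  by (simp_all add: zero_dual_def one_dual_def plus_dual_def minus_dual_def
      uminus_dual_def times_dual_def)

lemma re_power [simp]: "re (x ^ k) = re x ^ k"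
  by (induction k) auto

lemma ep_power [simp]: "ep (x ^ k) = of_nat k * re x ^ (k - 1) * ep x"
proof (induction k)
  case (Suc k) then show ?case
    by (cases k) (auto simp: algebra_simps)
qed simp

definition hom :: "('b::comm_ring_1 \<Rightarrow> 'c::comm_ring_1) \<Rightarrow> bool" where
  "hom h \<longleftrightarrow> (\<forall>x y. h (x + y) = h x + h y) \<and> (\<forall>x y. h (x * y) = h x * h y) \<and> h 1 = 1"

lemma hom_add: "hom h \<Longrightarrow> h (x + y) = h x + h y" by (simp add: hom_def)
lemma hom_mult: "hom h \<Longrightarrow> h (x * y) = h x * h y" by (simp add: hom_def)
lemma hom_1: "hom h \<Longrightarrow> h 1 = 1" by (simp add: hom_def)
lemma hom_0: "hom h \<Longrightarrow> h 0 = 0"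
proof -
  assume "hom h"
  then have "h (0 + 0) = h 0 + h 0" by (rule hom_add)
  then show ?thesis by simp
qed
lemma hom_uminus: "hom h \<Longrightarrow> h (- x) = - h x"
proof -
  assume h: "hom h"
  then have "h (x + - x) = h x + h (- x)" by (rule hom_add)
  then show ?thesis using hom_0[OF h] by (simp add: eq_neg_iff_add_eq_0 add.commute)
qed
lemma hom_diff: "hom h \<Longrightarrow> h (x - y) = h x - h y"
  using hom_add[of h x "- y"] hom_uminus[of h y] by simp
lemma hom_power: "hom h \<Longrightarrow> h (x ^ k) = h x ^ k"
  by (induction k) (simp_all add: hom_1 hom_mult)
lemma hom_of_nat: "hom h \<Longrightarrow> h (of_nat k) = of_nat k"
  by (induction k) (simp_all add: hom_1 hom_add hom_0)
lemma hom_numeral: "hom h \<Longrightarrow> h (numeral k) = numeral k"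
  using hom_of_nat[of h "numeral k"] by simp
lemma hom_sum: "hom h \<Longrightarrow> h (sum f A) = (\<Sum>x\<in>A. h (f x))"
  by (induction A rule: infinite_finite_induct) (simp_all add: hom_0 hom_add)

lemmas hom_simps = hom_add hom_mult hom_1 hom_0 hom_uminus hom_diff hom_power hom_of_nat hom_numeral hom_sum

lemma hom_map_poly_add: "hom h \<Longrightarrow> map_poly h (p + q) = map_poly h p + map_poly h q"
  by (intro poly_eqI) (simp add: coeff_map_poly hom_simps)

lemma hom_map_poly_mult: "hom h \<Longrightarrow> map_poly h (p * q) = map_poly h p * map_poly h q"
  by (intro poly_eqI) (simp add: coeff_map_poly hom_simps coeff_mult)

lemma hom_poly: "hom h \<Longrightarrow> hom (\<lambda>p. poly (map_poly h p) y)"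
  unfolding hom_def[of "\<lambda>p. poly (map_poly h p) y"]
  by (simp add: hom_map_poly_add hom_map_poly_mult hom_1)

lemma hom_poly_const: "hom h \<Longrightarrow> poly (map_poly h [:a:]) y = h a"
  by (simp add: hom_0 map_poly_pCons)
lemma hom_poly_X: "hom h \<Longrightarrow> poly (map_poly h [:0,1:]) y = y"
  by (simp add: hom_0 hom_1 map_poly_pCons)

lemma hom_Dual: "hom (\<lambda>x. Dual x 0)"
  by (simp add: hom_def plus_dual_def times_dual_def one_dual_def)

lemma hom_id: "hom (\<lambda>x. x)" by (simp add: hom_def)

lemma hom_comp: "hom g \<Longrightarrow> hom h \<Longrightarrow> hom (\<lambda>x. g (h x))"
  by (simp add: hom_def)

definition evh :: "('b::comm_ring_1 \<Rightarrow> 'c::comm_ring_1) \<Rightarrow> 'c \<Rightarrow> 'c \<Rightarrow> 'c \<Rightarrow> 'b poly poly poly \<Rightarrow> 'c" where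
  "evh k y1 y3 y4 p = poly (map_poly (\<lambda>q. poly (map_poly (\<lambda>r. poly (map_poly k r) y1) q) y3) p) y4"

lemma hom_evh: "hom k \<Longrightarrow> hom (evh k y1 y3 y4)"
  unfolding evh_def by (intro hom_poly) 

definition cc :: "'a::comm_ring_1 \<Rightarrow> 'a poly poly poly" where "cc a = [:[:[:a:]:]:]"
definition "X1 = [:[:[:0,1:]:]:]"
definition "X3 = [:[:0,1:]:]"
definition "X4 = [:0,1:]"

lemma hom_cc: "hom cc"
  by (simp add: hom_def cc_def one_pCons)

lemma evh_vals:
  assumes "hom k"
  shows "evh k y1 y3 y4 (cc a) = k a" "evh k y1 y3 y4 X1 = y1" "evh k y1 y3 y4 X3 = y3" "evh k y1 y3 y4 X4 = y4"
  using assms by (simp_all add: evh_def cc_def X1_def X3_def X4_def hom_0 hom_1 map_poly_pCons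
      hom_poly[THEN hom_0] hom_poly[THEN hom_1])

lemma hom_Pn: "hom h \<Longrightarrow> h (Pn n u1 u2 u3 u4 a b) = Pn n (h u1) (h u2) (h u3) (h u4) (h a) (h b)"
  by (simp add: Pn_def hom_simps)



lemma pascal_sum:
  fixes f :: "nat \<Rightarrow> 'b::comm_ring_1"
  shows "(\<Sum>j\<le>Suc n. of_nat (Suc n choose j) * f j) =
    (\<Sum>j\<le>n. of_nat (n choose j) * f j) + (\<Sum>j\<le>n. of_nat (n choose j) * f (Suc j))"
proof -
  have "(\<Sum>j\<le>Suc n. of_nat (Suc n choose j) * f j) = f 0 + (\<Sum>j\<le>n. of_nat (Suc n choose Suc j) * f (Suc j))"
    by (subst sum.atMost_Suc_shift) simp
  also have "\<dots> = f 0 + (\<Sum>j\<le>n. of_nat (n choose Suc j) * f (Suc j)) + (\<Sum>j\<le>n. of_nat (n choose j) * f (Suc j))"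
    by (simp add: sum.distrib algebra_simps)
  also have "f 0 + (\<Sum>j\<le>n. of_nat (n choose Suc j) * f (Suc j)) = (\<Sum>j\<le>Suc n. of_nat (n choose j) * f j)"
    by (subst sum.atMost_Suc_shift) simp
  also have "\<dots> = (\<Sum>j\<le>n. of_nat (n choose j) * f j)"
    by (simp add: binomial_eq_0)
  finally show ?thesis .
qed

definition Aa :: "nat \<Rightarrow> 'b::comm_ring_1 \<Rightarrow> 'b \<Rightarrow> 'b" where
  "Aa n r D = (\<Sum>j\<le>n. of_nat (n choose j) * (if even j then D ^ (j div 2) * r ^ (n - j) else 0))"
definition Bb :: "nat \<Rightarrow> 'b::comm_ring_1 \<Rightarrow> 'b \<Rightarrow> 'b" where
  "Bb n r D = (\<Sum>j\<le>n. of_nat (n choose j) * (if odd j then D ^ (j div 2) * r ^ (n - j) else 0))"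

lemma Aa_0 [simp]: "Aa 0 r D = 1" by (simp add: Aa_def)
lemma Bb_0 [simp]: "Bb 0 r D = 0" by (simp add: Bb_def)

lemma Aa_Suc: "Aa (Suc n) r D = r * Aa n r D + D * Bb n r D"
proof -
  have "Aa (Suc n) r D = (\<Sum>j\<le>n. of_nat (n choose j) * (if even j then D ^ (j div 2) * r ^ (Suc n - j) else 0))
     + (\<Sum>j\<le>n. of_nat (n choose j) * (if even (Suc j) then D ^ (Suc j div 2) * r ^ (Suc n - Suc j) else 0))"
    unfolding Aa_def by (rule pascal_sum)
  also have "(\<Sum>j\<le>n. of_nat (n choose j) * (if even j then D ^ (j div 2) * r ^ (Suc n - j) else 0))
     = r * Aa n r D"
    unfolding Aa_def sum_distrib_left
    by (rule sum.cong) (auto simp: Suc_diff_le algebra_simps)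
  also have "(\<Sum>j\<le>n. of_nat (n choose j) * (if even (Suc j) then D ^ (Suc j div 2) * r ^ (Suc n - Suc j) else 0))
     = D * Bb n r D"
    unfolding Bb_def sum_distrib_left
    by (rule sum.cong) (auto simp: algebra_simps elim: oddE)
  finally show ?thesis .
qed

lemma Bb_Suc: "Bb (Suc n) r D = Aa n r D + r * Bb n r D"
proof -
  have "Bb (Suc n) r D = (\<Sum>j\<le>n. of_nat (n choose j) * (if odd j then D ^ (j div 2) * r ^ (Suc n - j) else 0))
     + (\<Sum>j\<le>n. of_nat (n choose j) * (if odd (Suc j) then D ^ (Suc j div 2) * r ^ (Suc n - Suc j) else 0))"
    unfolding Bb_def by (rule pascal_sum)
  also have "(\<Sum>j\<le>n. of_nat (n choose j) * (if odd j then D ^ (j div 2) * r ^ (Suc n - j) else 0))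
     = r * Bb n r D"
    unfolding Bb_def sum_distrib_left
    by (rule sum.cong) (auto simp: Suc_diff_le algebra_simps)
  also have "(\<Sum>j\<le>n. of_nat (n choose j) * (if odd (Suc j) then D ^ (Suc j div 2) * r ^ (Suc n - Suc j) else 0))
     = Aa n r D"
    unfolding Aa_def
    by (rule sum.cong) (auto simp: algebra_simps elim: evenE)
  finally show ?thesis by (simp add: algebra_simps)
qed

lemma hom_Aa: "hom h \<Longrightarrow> h (Aa n r D) = Aa n (h r) (h D)"
  by (simp add: Aa_def hom_simps if_distrib cong: if_cong)
lemma hom_Bb: "hom h \<Longrightarrow> h (Bb n r D) = Bb n (h r) (h D)"
  by (simp add: Bb_def hom_simps if_distrib cong: if_cong)



definition lift :: "nat \<Rightarrow> nat" where "lift v = (if v = 0 then 0 else Suc v)"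

lemma lift_less [simp]: "lift a < lift b \<longleftrightarrow> a < b"
  by (auto simp: lift_def)
lemma lift_0 [simp]: "lift 0 = 0" by (simp add: lift_def)
lemma one_less_lift [simp]: "1 < lift b \<longleftrightarrow> b > 0" by (auto simp: lift_def)
lemma lift_less_one [simp]: "lift b < 1 \<longleftrightarrow> b = 0" by (auto simp: lift_def)

definition ins :: "nat \<Rightarrow> nat list \<Rightarrow> nat list" where
  "ins p xs = take p (map Suc xs) @ 1 # drop p (map Suc xs)"

lemma length_ins [simp]: "p \<le> length xs \<Longrightarrow> length (ins p xs) = Suc (length xs)"
  by (simp add: ins_def)

lemma sig_0 [simp]: "sig xs 0 = 0" by (simp add: sig_def)
lemma sig_big: "i > length xs \<Longrightarrow> sig xs i = 0" by (simp add: sig_def)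
lemma sig_pos: "0 \<notin> set xs \<Longrightarrow> 1 \<le> i \<Longrightarrow> i \<le> length xs \<Longrightarrow> sig xs i > 0"
proof -
  assume a: "0 \<notin> set xs" "1 \<le> i" "i \<le> length xs"
  then have "xs ! (i - 1) \<in> set xs" by (intro nth_mem) arith
  then have "xs ! (i - 1) \<noteq> 0" using a(1) by metis
  then show ?thesis using a by (simp add: sig_def)
qed
lemma sig_pos_iff: "0 \<notin> set xs \<Longrightarrow> sig xs i > 0 \<longleftrightarrow> 1 \<le> i \<and> i \<le> length xs"
  using sig_pos[of xs i] by (auto simp: sig_def split: if_splits)
lemma sig_inj: "distinct xs \<Longrightarrow> 1 \<le> i \<Longrightarrow> i \<le> length xs \<Longrightarrow> 1 \<le> j \<Longrightarrow> j \<le> length xs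
   \<Longrightarrow> sig xs i = sig xs j \<Longrightarrow> i = j"
  unfolding sig_def by (simp add: nth_eq_iff_index_eq)


lemma nth_ins_lo: "k < p \<Longrightarrow> p \<le> length xs \<Longrightarrow> ins p xs ! k = Suc (xs ! k)"
  by (simp add: ins_def nth_append)
lemma nth_ins_mid: "p \<le> length xs \<Longrightarrow> ins p xs ! p = 1"
  by (simp add: ins_def nth_append)
lemma nth_ins_hi: "p < k \<Longrightarrow> k \<le> length xs \<Longrightarrow> ins p xs ! k = Suc (xs ! (k - 1))"
proof -
  assume a: "p < k" "k \<le> length xs"
  then have "ins p xs ! k = (1 # drop p (map Suc xs)) ! (k - p)" by (simp add: ins_def nth_append)
  also have "\<dots> = drop p (map Suc xs) ! (k - p - 1)" using a by (simp add: nth_Cons')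
  also have "\<dots> = Suc (xs ! (k - 1))" using a by simp
  finally show ?thesis .
qed

lemma sig_ins:
  assumes "p \<le> length xs" "0 \<notin> set xs"
  shows "sig (ins p xs) i = (if i \<le> p then lift (sig xs i) else if i = Suc p then 1 else lift (sig xs (i - 1)))"
proof -
  have nz: "xs ! k \<noteq> 0" if "k < length xs" for k using assms(2) that by (metis nth_mem)
  consider "i = 0" | "1 \<le> i \<and> i \<le> p" | "i = Suc p" | "Suc p < i \<and> i \<le> Suc (length xs)" | "i > Suc (length xs)"
    by linarith
  then show ?thesis
  proof cases
    case 1 then show ?thesis by simp
  next
    case 2
    then have "ins p xs ! (i - 1) = Suc (xs ! (i - 1))" "xs ! (i - 1) \<noteq> 0"
      using assms(1) nth_ins_lo[of "i - 1" p xs] nz[of "i - 1"] by auto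
    then show ?thesis using 2 assms(1) by (simp add: sig_def lift_def)
  next
    case 3 then show ?thesis using assms(1) nth_ins_mid[of p xs] by (simp add: sig_def)
  next
    case 4
    define j where "j = i - 2"
    have j: "i = Suc (Suc j)" "p \<le> j" "j < length xs" using 4 assms(1) unfolding j_def by arith+
    from j have "ins p xs ! Suc j = Suc (xs ! j)" "xs ! j \<noteq> 0"
      using assms(1) nth_ins_hi[of p "Suc j" xs] nz[of j] by auto
    then show ?thesis using j assms(1) by (simp add: sig_def lift_def)
  next
    case 5
    then have "sig xs (i - 1) = 0" "sig (ins p xs) i = 0" using assms(1) by (simp_all add: sig_big)
    then show ?thesis using 5 assms(1) by simp
  qed
qed

definition tV :: "nat \<Rightarrow> nat \<Rightarrow> nat \<Rightarrow> bool" where "tV a b c \<longleftrightarrow> b < a \<and> b < c"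
definition tP :: "nat \<Rightarrow> nat \<Rightarrow> nat \<Rightarrow> bool" where "tP a b c \<longleftrightarrow> a < b \<and> c < b"
definition tD :: "nat \<Rightarrow> nat \<Rightarrow> nat \<Rightarrow> bool" where "tD a b c \<longleftrightarrow> b < a \<and> c < b"
definition tA :: "nat \<Rightarrow> nat \<Rightarrow> nat \<Rightarrow> bool" where "tA a b c \<longleftrightarrow> a < b \<and> b < c"

definition Fw :: "(nat \<Rightarrow> nat \<Rightarrow> nat \<Rightarrow> bool) \<Rightarrow> nat list \<Rightarrow> nat \<Rightarrow> nat" where
  "Fw T xs i = (if T (sig xs (i - 1)) (sig xs i) (sig xs (Suc i)) then 1 else 0)"

definition cnt :: "(nat \<Rightarrow> nat \<Rightarrow> nat \<Rightarrow> bool) \<Rightarrow> nat list \<Rightarrow> nat" where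
  "cnt T xs = (\<Sum>i<length xs + 2. Fw T xs i)"

lemma card_filter_sum: "finite A \<Longrightarrow> card {x\<in>A. P x} = (\<Sum>x\<in>A. if P x then 1 else 0)"
  using sum.inter_filter[of A "\<lambda>_. 1::nat" P] by simp

lemma cnt_card: "cnt T xs = card {i\<in>{..<length xs + 2}. T (sig xs (i - 1)) (sig xs i) (sig xs (Suc i))}"
  unfolding cnt_def Fw_def by (simp only: card_filter_sum[OF finite_lessThan])

lemma sig_gt: "0 \<notin> set xs \<Longrightarrow> sig xs i < sig xs j \<Longrightarrow> 1 \<le> j \<and> j \<le> length xs"
  using sig_pos_iff[of xs j] by simp

lemma Vst_cnt: assumes "0 \<notin> set xs" shows "Vst xs = cnt tV xs"
proof -
  have "{i. 1 < i \<and> i < length xs \<and> sig xs (i - 1) > sig xs i \<and> sig xs i < sig xs (i + 1)}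
     = {i\<in>{..<length xs + 2}. tV (sig xs (i - 1)) (sig xs i) (sig xs (Suc i))}"
    by (auto simp: tV_def dest: sig_gt[OF assms])
  then show ?thesis unfolding Vst_def cnt_card by simp
qed


lemma Wst_cnt: assumes "0 \<notin> set xs" shows "Wst xs = cnt tP xs"
proof -
  have "{i \<in> {1..length xs}. sig xs (i - 1) < sig xs i \<and> sig xs i > sig xs (i + 1)}
     = {i\<in>{..<length xs + 2}. tP (sig xs (i - 1)) (sig xs i) (sig xs (Suc i))}"
    by (auto simp: tP_def dest: sig_gt[OF assms])
  then show ?thesis unfolding Wst_def cnt_card by simp
qed

lemma rdd_cnt: assumes "0 \<notin> set xs" shows "rdd xs = cnt tD xs"
proof -
  have "{i. 1 < i \<and> i \<le> length xs \<and> sig xs (i - 1) > sig xs i \<and> sig xs i > sig xs (i + 1)}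
     = {i\<in>{..<length xs + 2}. tD (sig xs (i - 1)) (sig xs i) (sig xs (Suc i))}"
    by (auto simp: tD_def dest: sig_gt[OF assms])
  then show ?thesis unfolding rdd_def cnt_card by simp
qed

lemma lda_cnt: assumes "0 \<notin> set xs" shows "lda xs = cnt tA xs"
proof -
  have "{i. 1 \<le> i \<and> i < length xs \<and> sig xs (i - 1) < sig xs i \<and> sig xs i < sig xs (i + 1)}
     = {i\<in>{..<length xs + 2}. tA (sig xs (i - 1)) (sig xs i) (sig xs (Suc i))}"
    by (auto simp: tA_def dest: sig_gt[OF assms])
  then show ?thesis unfolding lda_def cnt_card by simp
qed


lemma sum_lessThan_add: "(\<Sum>i<a+b. f i) = (\<Sum>i<a. f i) + (\<Sum>i<b. f (a+i))" for f :: "nat \<Rightarrow> 'b::comm_monoid_add"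
  by (induction b) (simp_all add: add.assoc)

lemma sig_ins_le: "p \<le> length xs \<Longrightarrow> 0 \<notin> set xs \<Longrightarrow> i \<le> p \<Longrightarrow> sig (ins p xs) i = lift (sig xs i)"
  by (simp add: sig_ins)
lemma sig_ins_mid: "p \<le> length xs \<Longrightarrow> 0 \<notin> set xs \<Longrightarrow> sig (ins p xs) (Suc p) = 1"
  by (simp add: sig_ins)
lemma sig_ins_gt: "p \<le> length xs \<Longrightarrow> 0 \<notin> set xs \<Longrightarrow> sig (ins p xs) (Suc (Suc (p + k))) = lift (sig xs (Suc (p + k)))"
  by (simp add: sig_ins)

lemma cnt_ins:
  assumes p: "p \<le> length xs" and nz: "0 \<notin> set xs"
    and inv: "\<And>a b c. T (lift a) (lift b) (lift c) = T a b c"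
  shows "cnt T (ins p xs) + Fw T xs p + Fw T xs (Suc p) = cnt T xs
     + (if T (lift (sig xs (p - 1))) (lift (sig xs p)) 1 then 1 else 0)
     + (if T (lift (sig xs p)) 1 (lift (sig xs (Suc p))) then 1 else 0)
     + (if T 1 (lift (sig xs (Suc p))) (lift (sig xs (Suc (Suc p)))) then 1 else 0)"
proof -
  define m where "m = length xs"
  define g where "g = Fw T (ins p xs)"
  define h where "h = Fw T xs"
  have lo: "g i = h i" if "i < p" for i
    using that p nz unfolding g_def h_def Fw_def by (simp add: sig_ins_le inv)
  have hi: "g (p + 3 + i) = h (p + 2 + i)" for i
    unfolding g_def h_def Fw_def using p nz by (simp add: sig_ins inv numeral_3_eq_3)
  have gp: "g p = (if T (lift (sig xs (p - 1))) (lift (sig xs p)) 1 then 1 else 0)"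
    unfolding g_def Fw_def using p nz by (simp add: sig_ins_le sig_ins_mid)
  have gp1: "g (Suc p) = (if T (lift (sig xs p)) 1 (lift (sig xs (Suc p))) then 1 else 0)"
    unfolding g_def Fw_def using p nz sig_ins_gt[OF p nz, of 0] by (simp add: sig_ins_le sig_ins_mid)
  have gp2: "g (Suc (Suc p)) = (if T 1 (lift (sig xs (Suc p))) (lift (sig xs (Suc (Suc p)))) then 1 else 0)"
    unfolding g_def Fw_def using p nz sig_ins_gt[OF p nz, of 0] sig_ins_gt[OF p nz, of 1] by (simp add: sig_ins_mid)
  have L: "cnt T (ins p xs) = sum g {..<p} + g p + g (Suc p) + g (Suc (Suc p)) + (\<Sum>i<m - p. g (p + 3 + i))"
  proof -
    have e: "p + (3 + (m - p)) = length (ins p xs) + 2" using p by (simp add: m_def)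
    have "cnt T (ins p xs) = (\<Sum>i<p + (3 + (m - p)). g i)"
      unfolding e cnt_def g_def ..
    also have "\<dots> = sum g {..<p} + (\<Sum>i<3 + (m - p). g (p + i))" by (rule sum_lessThan_add)
    also have "(\<Sum>i<3 + (m - p). g (p + i)) = (\<Sum>i<3. g (p + i)) + (\<Sum>i<m - p. g (p + (3 + i)))"
      by (rule sum_lessThan_add)
    finally show ?thesis by (simp add: numeral_3_eq_3 add.assoc)
  qed
  have R: "cnt T xs = sum h {..<p} + h p + h (Suc p) + (\<Sum>i<m - p. h (p + 2 + i))"
  proof -
    have e: "p + (2 + (m - p)) = length xs + 2" using p by (simp add: m_def)
    have "cnt T xs = (\<Sum>i<p + (2 + (m - p)). h i)"
      unfolding e cnt_def h_def ..
    also have "\<dots> = sum h {..<p} + (\<Sum>i<2 + (m - p). h (p + i))" by (rule sum_lessThan_add)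
    also have "(\<Sum>i<2 + (m - p). h (p + i)) = (\<Sum>i<2. h (p + i)) + (\<Sum>i<m - p. h (p + (2 + i)))"
      by (rule sum_lessThan_add)
    finally show ?thesis by (simp add: numeral_2_eq_2 add.assoc)
  qed
  have "sum g {..<p} = sum h {..<p}" using lo by simp
  moreover have "(\<Sum>i<m - p. g (p + 3 + i)) = (\<Sum>i<m - p. h (p + 2 + i))" using hi by simp
  ultimately show ?thesis
    using L R gp gp1 gp2 unfolding h_def by simp
qed


lemma inv_tV: "tV (lift a) (lift b) (lift c) = tV a b c" by (simp add: tV_def)
lemma inv_tP: "tP (lift a) (lift b) (lift c) = tP a b c" by (simp add: tP_def)
lemma inv_tD: "tD (lift a) (lift b) (lift c) = tD a b c" by (simp add: tD_def)
lemma inv_tA: "tA (lift a) (lift b) (lift c) = tA a b c" by (simp add: tA_def)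

lemma sig_eq: "distinct xs \<Longrightarrow> 0 \<notin> set xs \<Longrightarrow> sig xs i = sig xs j \<Longrightarrow> sig xs i > 0 \<Longrightarrow> i = j"
  using sig_pos_iff[of xs i] sig_pos_iff[of xs j] sig_inj[of xs i j] by auto

lemma lift_eq_0 [simp]: "lift v = 0 \<longleftrightarrow> v = 0" by (simp add: lift_def)
lemma Suc0_less_lift [simp]: "Suc 0 < lift v \<longleftrightarrow> 0 < v" by (auto simp: lift_def)
lemma lift_less_Suc0 [simp]: "lift v < Suc 0 \<longleftrightarrow> v = 0" by (auto simp: lift_def)
lemma zero_less_lift [simp]: "0 < lift v \<longleftrightarrow> 0 < v" by (auto simp: lift_def)

lemma lift_pos: "v > 0 \<Longrightarrow> lift v = Suc v" by (simp add: lift_def)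

lemma Fw_p: "Fw T xs p = (if T (sig xs (p - 1)) (sig xs p) (sig xs (Suc p)) then 1 else 0)"
  by (simp add: Fw_def)
lemma Fw_Sp: "Fw T xs (Suc p) = (if T (sig xs p) (sig xs (Suc p)) (sig xs (Suc (Suc p))) then 1 else 0)"
  by (simp add: Fw_def)

lemma slot0:
  assumes "0 < length xs" "0 \<notin> set xs"
  shows "cnt tV (ins 0 xs) = cnt tV xs" "cnt tP (ins 0 xs) = cnt tP xs"
    "cnt tD (ins 0 xs) = cnt tD xs" "cnt tA (ins 0 xs) = Suc (cnt tA xs)"
proof -
  have c: "sig xs 1 > 0" using assms by (intro sig_pos) (auto simp: Suc_le_eq)
  show "cnt tV (ins 0 xs) = cnt tV xs" using cnt_ins[of 0 xs tV, OF _ assms(2) inv_tV] c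
    by (simp add: Fw_p Fw_Sp tV_def lift_pos)
  show "cnt tP (ins 0 xs) = cnt tP xs" using cnt_ins[of 0 xs tP, OF _ assms(2) inv_tP] c
    by (simp add: Fw_p Fw_Sp tP_def lift_pos)
  show "cnt tD (ins 0 xs) = cnt tD xs" using cnt_ins[of 0 xs tD, OF _ assms(2) inv_tD] c
    by (simp add: Fw_p Fw_Sp tD_def lift_pos)
  show "cnt tA (ins 0 xs) = Suc (cnt tA xs)" using cnt_ins[of 0 xs tA, OF _ assms(2) inv_tA] c
    by (simp add: Fw_p Fw_Sp tA_def lift_pos)
qed

lemma slotm:
  assumes "0 < length xs" "0 \<notin> set xs" "p = length xs"
  shows "cnt tV (ins p xs) = cnt tV xs" "cnt tP (ins p xs) = cnt tP xs"
    "cnt tD (ins p xs) = Suc (cnt tD xs)" "cnt tA (ins p xs) = cnt tA xs"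
proof -
  have b: "sig xs p > 0" using assms by (intro sig_pos) (auto simp: Suc_le_eq)
  have c: "sig xs (Suc p) = 0" "sig xs (Suc (Suc p)) = 0" using assms by (simp_all add: sig_big)
  show "cnt tV (ins p xs) = cnt tV xs" using cnt_ins[of p xs tV, OF _ assms(2) inv_tV] b c assms
    by (simp add: Fw_p Fw_Sp tV_def lift_pos)
  show "cnt tP (ins p xs) = cnt tP xs" using cnt_ins[of p xs tP, OF _ assms(2) inv_tP] b c assms
    by (simp add: Fw_p Fw_Sp tP_def lift_pos)
  show "cnt tD (ins p xs) = Suc (cnt tD xs)" using cnt_ins[of p xs tD, OF _ assms(2) inv_tD] b c assms
    by (simp add: Fw_p Fw_Sp tD_def lift_pos)
  show "cnt tA (ins p xs) = cnt tA xs" using cnt_ins[of p xs tA, OF _ assms(2) inv_tA] b c assms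
    by (simp add: Fw_p Fw_Sp tA_def lift_pos)
qed


lemma slotI:
  assumes dist: "distinct xs" and nz: "0 \<notin> set xs" and p1: "1 \<le> p" and pm: "p < length xs"
  defines "a \<equiv> sig xs (p - 1)" and "b \<equiv> sig xs p" and "c \<equiv> sig xs (Suc p)" and "d \<equiv> sig xs (Suc (Suc p))"
  shows "tA a b c \<Longrightarrow> cnt tV (ins p xs) = Suc (cnt tV xs) \<and> cnt tP (ins p xs) = Suc (cnt tP xs)
            \<and> cnt tD (ins p xs) = cnt tD xs \<and> Suc (cnt tA (ins p xs)) = cnt tA xs"
    and "tV a b c \<Longrightarrow> cnt tV (ins p xs) = cnt tV xs \<and> cnt tP (ins p xs) = cnt tP xs
            \<and> cnt tD (ins p xs) = Suc (cnt tD xs) \<and> cnt tA (ins p xs) = cnt tA xs"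
    and "tD b c d \<Longrightarrow> cnt tV (ins p xs) = Suc (cnt tV xs) \<and> cnt tP (ins p xs) = Suc (cnt tP xs)
            \<and> Suc (cnt tD (ins p xs)) = cnt tD xs \<and> cnt tA (ins p xs) = cnt tA xs"
    and "tV b c d \<Longrightarrow> cnt tV (ins p xs) = cnt tV xs \<and> cnt tP (ins p xs) = cnt tP xs
            \<and> cnt tD (ins p xs) = cnt tD xs \<and> cnt tA (ins p xs) = Suc (cnt tA xs)"
    and "tA a b c \<or> tV a b c \<or> tD b c d \<or> tV b c d"
proof -
  have pl: "p \<le> length xs" using pm by simp
  have bp: "b > 0" unfolding b_def using nz p1 pm by (intro sig_pos) auto
  have cp: "c > 0" unfolding c_def using nz p1 pm by (intro sig_pos) auto
  have ab: "a \<noteq> b"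
  proof
    assume "a = b"
    then have "p - 1 = p" unfolding a_def b_def using sig_eq[OF dist nz, of "p - 1" p] bp a_def b_def by auto
    then show False using p1 by simp
  qed
  have bc: "b \<noteq> c" using sig_eq[OF dist nz, of p "Suc p"] bp unfolding b_def c_def by auto
  have cd: "c \<noteq> d" using sig_eq[OF dist nz, of "Suc p" "Suc (Suc p)"] cp unfolding c_def d_def by auto
  note facts = bp cp ab bc cd
  note I = cnt_ins[of p xs tV, OF pl nz inv_tV] cnt_ins[of p xs tP, OF pl nz inv_tP] cnt_ins[of p xs tD, OF pl nz inv_tD] cnt_ins[of p xs tA, OF pl nz inv_tA]
  note I = I[unfolded Fw_p Fw_Sp, folded a_def b_def c_def d_def]
  note S = tV_def tP_def tD_def tA_def b_def[symmetric] c_def[symmetric] d_def[symmetric]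
  show "tA a b c \<Longrightarrow> cnt tV (ins p xs) = Suc (cnt tV xs) \<and> cnt tP (ins p xs) = Suc (cnt tP xs)
            \<and> cnt tD (ins p xs) = cnt tD xs \<and> Suc (cnt tA (ins p xs)) = cnt tA xs"
    using I facts by (simp add: S split: if_splits)
  show "tV a b c \<Longrightarrow> cnt tV (ins p xs) = cnt tV xs \<and> cnt tP (ins p xs) = cnt tP xs
            \<and> cnt tD (ins p xs) = Suc (cnt tD xs) \<and> cnt tA (ins p xs) = cnt tA xs"
    using I facts by (simp add: S split: if_splits)
  show "tD b c d \<Longrightarrow> cnt tV (ins p xs) = Suc (cnt tV xs) \<and> cnt tP (ins p xs) = Suc (cnt tP xs)
            \<and> Suc (cnt tD (ins p xs)) = cnt tD xs \<and> cnt tA (ins p xs) = cnt tA xs"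
    using I facts by (simp add: S split: if_splits)
  show "tV b c d \<Longrightarrow> cnt tV (ins p xs) = cnt tV xs \<and> cnt tP (ins p xs) = cnt tP xs
            \<and> cnt tD (ins p xs) = cnt tD xs \<and> cnt tA (ins p xs) = Suc (cnt tA xs)"
    using I facts by (simp add: S split: if_splits)
  show "tA a b c \<or> tV a b c \<or> tD b c d \<or> tV b c d"
    using facts by (auto simp: tV_def tD_def tA_def)
qed


lemma sum_ins1:
  fixes g h :: "nat \<Rightarrow> 'b::comm_monoid_add"
  assumes "q \<le> N" "\<And>i. i < q \<Longrightarrow> g i = h i" "\<And>i. g (q + 1 + i) = h (q + i)"
  shows "sum g {..<N+1} = sum h {..<N} + g q"
proof -
  have "sum g {..<N+1} = sum g {..<q + (1 + (N - q))}" using assms(1) by simp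
  also have "\<dots> = sum g {..<q} + (\<Sum>i<1 + (N - q). g (q + i))" by (rule sum_lessThan_add)
  also have "(\<Sum>i<1 + (N - q). g (q + i)) = (\<Sum>i<1. g (q + i)) + (\<Sum>i<N - q. g (q + (1 + i)))"
    by (rule sum_lessThan_add)
  finally have G: "sum g {..<N+1} = sum g {..<q} + g q + (\<Sum>i<N - q. g (q + 1 + i))" by (simp add: add_ac)
  have "sum h {..<N} = sum h {..<q + (N - q)}" using assms(1) by simp
  also have "\<dots> = sum h {..<q} + (\<Sum>i<N - q. h (q + i))" by (rule sum_lessThan_add)
  finally have H: "sum h {..<N} = sum h {..<q} + (\<Sum>i<N - q. h (q + i))" .
  show ?thesis unfolding G H using assms(2,3) by (simp add: add_ac)
qed

definition lrI :: "nat list \<Rightarrow> nat \<Rightarrow> bool" where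
  "lrI xs i \<longleftrightarrow> 0 < sig xs i \<and> (\<forall>j<i. sig xs j < sig xs i)"
definition rlI :: "nat list \<Rightarrow> nat \<Rightarrow> bool" where
  "rlI xs i \<longleftrightarrow> 0 < sig xs i \<and> (\<forall>j>i. sig xs j < sig xs i)"

lemma LRmax_sum: assumes "0 \<notin> set xs"
  shows "LRmax xs = (\<Sum>i<length xs + 1. if lrI xs i then 1 else 0)"
proof -
  have "{i \<in> {1..length xs}. \<forall>j \<in> {1..<i}. sig xs j < sig xs i} = {i\<in>{..<length xs + 1}. lrI xs i}"
  proof (intro set_eqI iffI)
    fix i assume "i \<in> {i \<in> {1..length xs}. \<forall>j \<in> {1..<i}. sig xs j < sig xs i}"
    then have i: "1 \<le> i" "i \<le> length xs" "\<forall>j \<in> {1..<i}. sig xs j < sig xs i" by auto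
    have p: "0 < sig xs i" using sig_pos[OF assms i(1,2)] .
    have "\<forall>j<i. sig xs j < sig xs i"
    proof (intro allI impI)
      fix j assume "j < i"
      then show "sig xs j < sig xs i" using i(3) p by (cases "j = 0") auto
    qed
    then show "i \<in> {i\<in>{..<length xs + 1}. lrI xs i}" using i p by (auto simp: lrI_def)
  next
    fix i assume "i \<in> {i\<in>{..<length xs + 1}. lrI xs i}"
    then show "i \<in> {i \<in> {1..length xs}. \<forall>j \<in> {1..<i}. sig xs j < sig xs i}"
      using sig_pos_iff[OF assms, of i] by (auto simp: lrI_def)
  qed
  then show ?thesis unfolding LRmax_def by (simp only: card_filter_sum[OF finite_lessThan])
qed

lemma RLmax_sum: assumes "0 \<notin> set xs"
  shows "RLmax xs = (\<Sum>i<length xs + 1. if rlI xs i then 1 else 0)"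
proof -
  have "{i \<in> {1..length xs}. \<forall>j \<in> {i<..length xs}. sig xs j < sig xs i} = {i\<in>{..<length xs + 1}. rlI xs i}"
  proof (intro set_eqI iffI)
    fix i assume "i \<in> {i \<in> {1..length xs}. \<forall>j \<in> {i<..length xs}. sig xs j < sig xs i}"
    then have i: "1 \<le> i" "i \<le> length xs" "\<forall>j \<in> {i<..length xs}. sig xs j < sig xs i" by auto
    have p: "0 < sig xs i" using sig_pos[OF assms i(1,2)] .
    have "\<forall>j>i. sig xs j < sig xs i"
    proof (intro allI impI)
      fix j assume "j > i"
      then show "sig xs j < sig xs i" using i(3) p by (cases "j \<le> length xs") (auto simp: sig_big)
    qed
    then show "i \<in> {i\<in>{..<length xs + 1}. rlI xs i}" using i p by (auto simp: rlI_def)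
  next
    fix i assume "i \<in> {i\<in>{..<length xs + 1}. rlI xs i}"
    then show "i \<in> {i \<in> {1..length xs}. \<forall>j \<in> {i<..length xs}. sig xs j < sig xs i}"
      using sig_pos_iff[OF assms, of i] by (auto simp: rlI_def)
  qed
  then show ?thesis unfolding RLmax_def by (simp only: card_filter_sum[OF finite_lessThan])
qed

lemma LRmax_ins:
  assumes p: "p \<le> length xs" and nz: "0 \<notin> set xs"
  shows "LRmax (ins p xs) = LRmax xs + (if p = 0 then 1 else 0)"
proof -
  have nz': "0 \<notin> set (ins p xs)" by (auto simp: ins_def dest: in_set_takeD in_set_dropD)
  have S: "sig (ins p xs) j = (if j \<le> p then lift (sig xs j) else if j = Suc p then 1 else lift (sig xs (j - 1)))" for j
    by (rule sig_ins[OF p nz])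
  have lo: "lrI (ins p xs) i = lrI xs i" if "i < Suc p" for i
    using that unfolding lrI_def S by auto
  have hi: "lrI (ins p xs) (Suc p + 1 + i) = lrI xs (Suc p + i)" for i
  proof -
    define k where "k = Suc p + i"
    have "lrI (ins p xs) (Suc k) \<longleftrightarrow> lrI xs k"
    proof
      assume a: "lrI (ins p xs) (Suc k)"
      then have v: "0 < sig xs k" unfolding lrI_def S k_def by auto
      have "sig xs j < sig xs k" if "j < k" for j
      proof (cases "j \<le> p")
        case True
        then have "sig (ins p xs) j < sig (ins p xs) (Suc k)" using a that unfolding lrI_def by auto
        then show ?thesis using True unfolding S k_def by auto
      next
        case False
        then have "sig (ins p xs) (Suc j) < sig (ins p xs) (Suc k)" using a that unfolding lrI_def by auto
        then show ?thesis using False unfolding S k_def by auto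
      qed
      then show "lrI xs k" using v unfolding lrI_def by auto
    next
      assume a: "lrI xs k"
      have "sig (ins p xs) j < sig (ins p xs) (Suc k)" if "j < Suc k" for j
      proof -
        consider "j \<le> p" | "j = Suc p" | "j > Suc p" by linarith
        then show ?thesis
        proof cases
          case 1 then show ?thesis using a that unfolding lrI_def S k_def by auto
        next
          case 2 then show ?thesis using a that unfolding lrI_def S k_def by auto
        next
          case 3
          then have "j - 1 < k" using that by simp
          then show ?thesis using a 3 unfolding lrI_def S k_def by auto
        qed
      qed
      then show "lrI (ins p xs) (Suc k)" using a unfolding lrI_def S k_def by auto
    qed
    then show ?thesis unfolding k_def by simp
  qed
  have mid: "lrI (ins p xs) (Suc p) \<longleftrightarrow> p = 0"
  proof
    assume a: "lrI (ins p xs) (Suc p)"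
    show "p = 0"
    proof (rule ccontr)
      assume "p \<noteq> 0"
      then have "sig (ins p xs) p < sig (ins p xs) (Suc p)" using a unfolding lrI_def by auto
      moreover have "0 < sig xs p" using \<open>p \<noteq> 0\<close> p by (intro sig_pos[OF nz]) auto
      ultimately show False unfolding S by auto
    qed
  next
    assume "p = 0" then show "lrI (ins p xs) (Suc p)" unfolding lrI_def S by auto
  qed
  have "LRmax (ins p xs) = (\<Sum>i<length xs + 1 + 1. if lrI (ins p xs) i then 1 else 0)"
    using LRmax_sum[OF nz'] p by simp
  also have "\<dots> = (\<Sum>i<length xs + 1. if lrI xs i then 1 else 0) + (if lrI (ins p xs) (Suc p) then 1 else 0)"
    by (rule sum_ins1) (use p lo hi in auto)
  finally show ?thesis using mid LRmax_sum[OF nz] by simp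
qed


lemma RLmax_ins:
  assumes p: "p \<le> length xs" and nz: "0 \<notin> set xs"
  shows "RLmax (ins p xs) = RLmax xs + (if p = length xs then 1 else 0)"
proof -
  have nz': "0 \<notin> set (ins p xs)" by (auto simp: ins_def dest: in_set_takeD in_set_dropD)
  have S: "sig (ins p xs) j = (if j \<le> p then lift (sig xs j) else if j = Suc p then 1 else lift (sig xs (j - 1)))" for j
    by (rule sig_ins[OF p nz])
  have lo: "rlI (ins p xs) i = rlI xs i" if "i < Suc p" for i
  proof
    assume a: "rlI (ins p xs) i"
    then have v: "0 < sig xs i" using that unfolding rlI_def S by auto
    have "sig xs k < sig xs i" if "k > i" for k
    proof (cases "k \<le> p")
      case True
      then have "sig (ins p xs) k < sig (ins p xs) i" using a that unfolding rlI_def by auto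
      then show ?thesis using True \<open>i < Suc p\<close> that unfolding S by auto
    next
      case False
      then have "sig (ins p xs) (Suc k) < sig (ins p xs) i" using a that unfolding rlI_def by auto
      then show ?thesis using False \<open>i < Suc p\<close> unfolding S by auto
    qed
    then show "rlI xs i" using v unfolding rlI_def by auto
  next
    assume a: "rlI xs i"
    have "sig (ins p xs) j < sig (ins p xs) i" if "j > i" for j
    proof -
      consider "j \<le> p" | "j = Suc p" | "j > Suc p" by linarith
      then show ?thesis
      proof cases
        case 1 then show ?thesis using a that \<open>i < Suc p\<close> unfolding rlI_def S by auto
      next
        case 2 then show ?thesis using a that \<open>i < Suc p\<close> unfolding rlI_def S by auto
      next
        case 3
        then have "j - 1 > i" using \<open>i < Suc p\<close> by simp
        then show ?thesis using a 3 \<open>i < Suc p\<close> unfolding rlI_def S by auto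
      qed
    qed
    then show "rlI (ins p xs) i" using a \<open>i < Suc p\<close> unfolding rlI_def S by auto
  qed
  have hi: "rlI (ins p xs) (Suc p + 1 + i) = rlI xs (Suc p + i)" for i
  proof -
    define k where "k = Suc p + i"
    have "rlI (ins p xs) (Suc k) \<longleftrightarrow> rlI xs k"
    proof
      assume a: "rlI (ins p xs) (Suc k)"
      then have v: "0 < sig xs k" unfolding rlI_def S k_def by auto
      have "sig xs j < sig xs k" if "j > k" for j
      proof -
        have "sig (ins p xs) (Suc j) < sig (ins p xs) (Suc k)" using a that unfolding rlI_def by auto
        then show ?thesis using that unfolding S k_def by auto
      qed
      then show "rlI xs k" using v unfolding rlI_def by auto
    next
      assume a: "rlI xs k"
      have "sig (ins p xs) j < sig (ins p xs) (Suc k)" if "j > Suc k" for j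
      proof -
        have "j - 1 > k" using that by simp
        then show ?thesis using a that unfolding rlI_def S k_def by auto
      qed
      then show "rlI (ins p xs) (Suc k)" using a unfolding rlI_def S k_def by auto
    qed
    then show ?thesis unfolding k_def by simp
  qed
  have mid: "rlI (ins p xs) (Suc p) \<longleftrightarrow> p = length xs"
  proof
    assume a: "rlI (ins p xs) (Suc p)"
    show "p = length xs"
    proof (rule ccontr)
      assume "p \<noteq> length xs"
      then have "sig (ins p xs) (Suc (Suc p)) < sig (ins p xs) (Suc p)" using a unfolding rlI_def by auto
      moreover have "0 < sig xs (Suc p)" using \<open>p \<noteq> length xs\<close> p by (intro sig_pos[OF nz]) auto
      ultimately show False unfolding S by auto
    qed
  next
    assume "p = length xs" then show "rlI (ins p xs) (Suc p)" unfolding rlI_def S by (auto simp: sig_big)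
  qed
  have "RLmax (ins p xs) = (\<Sum>i<length xs + 1 + 1. if rlI (ins p xs) i then 1 else 0)"
    using RLmax_sum[OF nz'] p by simp
  also have "\<dots> = (\<Sum>i<length xs + 1. if rlI xs i then 1 else 0) + (if rlI (ins p xs) (Suc p) then 1 else 0)"
    by (rule sum_ins1) (use p lo hi in auto)
  finally show ?thesis using mid RLmax_sum[OF nz] by simp
qed


lemma perms_props: "xs \<in> perms m \<Longrightarrow> distinct xs \<and> 0 \<notin> set xs \<and> length xs = m \<and> set xs = {1..m}"
  unfolding perms_def using distinct_card[of xs] by auto

lemma finite_perms: "finite (perms m)"
proof -
  have "perms m \<subseteq> {xs. set xs \<subseteq> {1..m} \<and> length xs = m}" using perms_props by blast
  moreover have "finite {xs. set xs \<subseteq> {1..m} \<and> length xs = m}" by (rule finite_lists_length_eq) simp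
  ultimately show ?thesis by (rule finite_subset)
qed

lemma ins_perm: assumes "xs \<in> perms m" "p \<le> m" shows "ins p xs \<in> perms (Suc m)"
proof -
  have d: "distinct xs" and s: "set xs = {1..m}" and l: "length xs = m" using perms_props[OF assms(1)] by auto
  have d2: "distinct (map Suc xs)" using d by (simp add: distinct_map)
  have n1: "1 \<notin> set (map Suc xs)" using s by auto
  have "distinct (take p (map Suc xs) @ drop p (map Suc xs))" using d2 by simp
  then have "distinct (ins p xs)" using n1 unfolding ins_def
    using set_take_disj_set_drop_if_distinct[OF d2, of p p]
    by (auto simp: distinct_append dest: in_set_takeD in_set_dropD)
  moreover have "set (ins p xs) = insert 1 (set (map Suc xs))"
    unfolding ins_def by (metis append_take_drop_id set_append Un_insert_right insert_commute set_simps(2)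
      Un_insert_left Un_commute)
  moreover have "insert 1 (set (map Suc xs)) = {1..Suc m}"
    using s by (auto simp: image_iff)
  ultimately show ?thesis unfolding perms_def by simp
qed


lemma ins_inj:
  assumes "xs \<in> perms m" "ys \<in> perms m" "p \<le> m" "q \<le> m" "ins p xs = ins q ys"
  shows "p = q \<and> xs = ys"
proof -
  have l: "length xs = m" "length ys = m" using perms_props assms(1,2) by auto
  have d: "distinct (ins p xs)" using ins_perm[OF assms(1,3)] unfolding perms_def by simp
  have a: "ins p xs ! p = 1" "ins q ys ! q = 1" using l assms(3,4) by (simp_all add: ins_def nth_append)
  have "p = q"
    using d a assms(3,4,5) l nth_eq_iff_index_eq[OF d, of p q] by simp
  then have "take p (map Suc xs) @ 1 # drop p (map Suc xs) = take p (map Suc ys) @ 1 # drop p (map Suc ys)"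
    using assms(5) unfolding ins_def by simp
  then have "take p (map Suc xs) = take p (map Suc ys) \<and> drop p (map Suc xs) = drop p (map Suc ys)"
    using l by (subst (asm) append_eq_append_conv) auto
  then have "map Suc xs = map Suc ys" by (metis append_take_drop_id)
  then show ?thesis using \<open>p = q\<close> by (simp add: inj_map_eq_map)
qed

lemma ins_surj:
  assumes "zs \<in> perms (Suc m)"
  shows "\<exists>xs p. xs \<in> perms m \<and> p \<le> m \<and> zs = ins p xs"
proof -
  have d: "distinct zs" and s: "set zs = {1..Suc m}" and l: "length zs = Suc m" using perms_props[OF assms] by auto
  have "1 \<in> set zs" using s by simp
  then obtain p where p: "p < length zs" "zs ! p = 1" by (auto simp: in_set_conv_nth)
  define ws where "ws = take p zs @ drop (Suc p) zs"
  have zs: "zs = take p zs @ 1 # drop (Suc p) zs" using p id_take_nth_drop[of p zs] by simp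
  have d': "distinct (take p zs @ 1 # drop (Suc p) zs)" using d zs by metis
  have dws: "distinct ws" and n1: "1 \<notin> set ws"
    using d' unfolding ws_def by (auto simp: distinct_append)
  have sws: "set ws = {2..Suc m}"
  proof -
    have "set zs = insert 1 (set ws)" using zs unfolding ws_def by (metis set_append set_simps(2) Un_insert_right)
    then have "set ws = set zs - {1}" using n1 by auto
    moreover have "{1..Suc m} - {1} = {2..Suc m}" by auto
    ultimately show ?thesis using s by simp
  qed
  define xs where "xs = map (\<lambda>x. x - 1) ws"
  have mws: "map Suc xs = ws" unfolding xs_def map_map
    by (rule map_idI) (use sws in auto)
  have "distinct xs" using dws mws by (metis distinct_map)
  moreover have "set xs = {1..m}"
  proof -
    have "set xs = (\<lambda>x. x - 1) ` {2..Suc m}" unfolding xs_def using sws by simp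
    also have "\<dots> = {1..m}" by (auto simp: image_iff intro!: bexI[of _ "Suc _"])
    finally show ?thesis .
  qed
  ultimately have xp: "xs \<in> perms m" unfolding perms_def by simp
  have lt: "length (take p zs) = p" using p by simp
  have "ins p xs = take p ws @ 1 # drop p ws" unfolding ins_def mws ..
  also have "take p ws = take p zs" unfolding ws_def using lt by simp
  also have "drop p ws = drop (Suc p) zs" unfolding ws_def using lt by simp
  finally have "zs = ins p xs" using zs by simp
  moreover have "p \<le> m" using p l by simp
  ultimately show ?thesis using xp by blast
qed

lemma sum_perms_Suc:
  "(\<Sum>zs\<in>perms (Suc m). f zs) = (\<Sum>xs\<in>perms m. \<Sum>p\<le>m. f (ins p xs))"
proof -
  have img: "perms (Suc m) = (\<lambda>(xs, p). ins p xs) ` (perms m \<times> {..m})"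
    using ins_surj ins_perm by fastforce
  have inj: "inj_on (\<lambda>(xs, p). ins p xs) (perms m \<times> {..m})"
    by (auto simp: inj_on_def dest: ins_inj)
  have "(\<Sum>zs\<in>perms (Suc m). f zs) = (\<Sum>x\<in>perms m \<times> {..m}. f (case x of (xs, p) \<Rightarrow> ins p xs))"
    unfolding img by (subst sum.reindex[OF inj]) (simp add: comp_def)
  also have "\<dots> = (\<Sum>xs\<in>perms m. \<Sum>p\<le>m. f (ins p xs))"
    by (subst sum.cartesian_product) (simp add: case_prod_unfold)
  finally show ?thesis .
qed


lemma sig_le: "xs \<in> perms m \<Longrightarrow> sig xs j \<le> m"
  using perms_props[of xs m] nth_mem[of "j - 1" xs] by (auto simp: sig_def)

lemma LR_pos: assumes "xs \<in> perms m" "1 \<le> m" shows "1 \<le> LRmax xs"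
proof -
  have P: "distinct xs" "0 \<notin> set xs" "length xs = m" using perms_props[OF assms(1)] by auto
  have "lrI xs 1" unfolding lrI_def using sig_pos[OF P(2), of 1] assms P by auto
  then have "(if lrI xs 1 then 1 else 0) \<le> (\<Sum>i<length xs + 1. if lrI xs i then 1 else (0::nat))"
    using P assms by (intro member_le_sum) auto
  then show ?thesis using LRmax_sum[OF P(2)] \<open>lrI xs 1\<close> by simp
qed

lemma RL_pos: assumes "xs \<in> perms m" "1 \<le> m" shows "1 \<le> RLmax xs"
proof -
  have P: "distinct xs" "0 \<notin> set xs" "length xs = m" using perms_props[OF assms(1)] by auto
  have "rlI xs m" unfolding rlI_def using sig_pos[OF P(2), of m] assms P by (auto simp: sig_big)
  then have "(if rlI xs m then 1 else 0) \<le> (\<Sum>i<length xs + 1. if rlI xs i then 1 else (0::nat))"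
    using P assms by (intro member_le_sum) auto
  then show ?thesis using RLmax_sum[OF P(2)] \<open>rlI xs m\<close> by simp
qed

lemma W_pos: assumes "xs \<in> perms m" "1 \<le> m" shows "1 \<le> cnt tP xs"
proof -
  have P: "distinct xs" "0 \<notin> set xs" "length xs = m" "set xs = {1..m}" using perms_props[OF assms(1)] by auto
  have "m \<in> set xs" using P assms by simp
  then obtain k where k: "k < m" "xs ! k = m" using P(3) by (metis in_set_conv_nth)
  define i where "i = Suc k"
  have si: "sig xs i = m" using k P unfolding i_def sig_def by simp
  have ne1: "sig xs (i - 1) \<noteq> m"
  proof
    assume "sig xs (i - 1) = m"
    then have "i - 1 = i" using sig_eq[OF P(1,2), of "i - 1" i] si assms by simp
    then show False unfolding i_def by simp
  qed
  have ne2: "sig xs (Suc i) \<noteq> m"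
  proof
    assume "sig xs (Suc i) = m"
    then have "Suc i = i" using sig_eq[OF P(1,2), of "Suc i" i] si assms by simp
    then show False by simp
  qed
  have "tP (sig xs (i - 1)) (sig xs i) (sig xs (Suc i))"
    using ne1 ne2 si sig_le[OF assms(1), of "i - 1"] sig_le[OF assms(1), of "Suc i"] unfolding tP_def by auto
  then have F: "Fw tP xs i = 1" unfolding Fw_def by simp
  have "Fw tP xs i \<le> (\<Sum>i<length xs + 2. Fw tP xs i)"
    using k P unfolding i_def by (intro member_le_sum) auto
  then show ?thesis unfolding cnt_def F .
qed

lemma perms_1: "perms 1 = {[1]}"
proof (intro set_eqI iffI)
  fix xs assume "xs \<in> perms 1"
  then have "distinct xs" "set xs = {1}" "length xs = 1" using perms_props[of xs 1] by auto
  then show "xs \<in> {[1]}" by (cases xs) auto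
qed (auto simp: perms_def)

lemma Collect_eq_single: "{i. i = a \<and> P i} = (if P a then {a} else {})" by auto

lemma P0: "Pn 0 u1 u2 u3 u4 a b = 1"
proof -
  have "Vst [1] = 0" "Wst [1] = 1" "rdd [1] = 0" "lda [1] = 0" "LRmax [1] = 1" "RLmax [1] = 1"
    by (simp_all add: Vst_def Wst_def rdd_def lda_def LRmax_def RLmax_def sig_def Collect_eq_single)
  moreover have "perms (Suc 0) = {[Suc 0]}" using perms_1 by simp
  ultimately show ?thesis by (simp add: Pn_def)
qed




definition M :: "'b::comm_ring_1 \<Rightarrow> 'b \<Rightarrow> 'b \<Rightarrow> 'b \<Rightarrow> 'b \<Rightarrow> 'b \<Rightarrow> nat \<Rightarrow> nat \<Rightarrow> nat \<Rightarrow> nat \<Rightarrow> nat \<Rightarrow> nat \<Rightarrow> 'b" where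
  "M u1 u2 u3 u4 a b v w d e l r = u1 ^ v * u2 ^ (w - 1) * u3 ^ d * u4 ^ e * a ^ (l - 1) * b ^ (r - 1)"

lemma ep_M:
  assumes w1: "w \<ge> 1"
  shows "ep (M (Dual u1 (u1*(u3+u4))) (Dual u2 0) (Dual u3 (u1*u2)) (Dual u4 (u1*u2)) (Dual a 0) (Dual b 0) v w d e l r)
   = of_nat v * (u3 + u4) * M u1 u2 u3 u4 a b v w d e l r
     + of_nat d * M u1 u2 u3 u4 a b (Suc v) (Suc w) (d - 1) e l r
     + of_nat e * M u1 u2 u3 u4 a b (Suc v) (Suc w) d (e - 1) l r"
proof -
  obtain w' where w: "w = Suc w'" using w1 by (cases w) auto
  have h: "of_nat k * x ^ (k - 1) * (x * y) = of_nat k * x ^ k * y" for k and x y :: 'a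
    by (cases k) (simp_all add: algebra_simps)
  show ?thesis unfolding M_def w
    by (simp only: dual_simps re_power ep_power dual.sel h) (simp add: algebra_simps)
qed

lemma sum_if_const: "finite S \<Longrightarrow> (\<Sum>p\<in>S. if P p then c else 0) = of_nat (card {p\<in>S. P p}) * (c::'b::comm_ring_1)"
  by (simp add: sum.inter_filter[symmetric])

context
  fixes xs :: "nat list" and m :: nat
  assumes xs: "xs \<in> perms m"
begin

lemma xs_props: "distinct xs" "0 \<notin> set xs" "length xs = m"
  using perms_props[OF xs] by auto

lemma card_A: "card {p \<in> {1..<m}. tA (sig xs (p - 1)) (sig xs p) (sig xs (Suc p))} = cnt tA xs"
  unfolding cnt_card
proof (intro arg_cong[of _ _ card] set_eqI iffI)
  fix p assume "p \<in> {i\<in>{..<length xs + 2}. tA (sig xs (i - 1)) (sig xs i) (sig xs (Suc i))}"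
  then have i: "tA (sig xs (p - 1)) (sig xs p) (sig xs (Suc p))" by auto
  then have "1 \<le> p" "Suc p \<le> m" using sig_gt[OF xs_props(2), of "p - 1" p] sig_gt[OF xs_props(2), of p "Suc p"]
      xs_props unfolding tA_def by auto
  then show "p \<in> {p \<in> {1..<m}. tA (sig xs (p - 1)) (sig xs p) (sig xs (Suc p))}" using i by auto
qed (use xs_props in auto)

lemma card_Va: "card {p \<in> {1..<m}. tV (sig xs (p - 1)) (sig xs p) (sig xs (Suc p))} = cnt tV xs"
  unfolding cnt_card
proof (intro arg_cong[of _ _ card] set_eqI iffI)
  fix p assume "p \<in> {i\<in>{..<length xs + 2}. tV (sig xs (i - 1)) (sig xs i) (sig xs (Suc i))}"
  then have i: "tV (sig xs (p - 1)) (sig xs p) (sig xs (Suc p))" by auto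
  then have "1 \<le> p - 1" "Suc p \<le> m" using sig_gt[OF xs_props(2), of p "p - 1"] sig_gt[OF xs_props(2), of p "Suc p"]
      xs_props unfolding tV_def by auto
  then show "p \<in> {p \<in> {1..<m}. tV (sig xs (p - 1)) (sig xs p) (sig xs (Suc p))}" using i by auto
qed (use xs_props in auto)

lemma card_D: "card {p \<in> {1..<m}. tD (sig xs p) (sig xs (Suc p)) (sig xs (Suc (Suc p)))} = cnt tD xs"
proof -
  have E: "Suc ` {p \<in> {1..<m}. tD (sig xs p) (sig xs (Suc p)) (sig xs (Suc (Suc p)))}
      = {i\<in>{..<length xs + 2}. tD (sig xs (i - 1)) (sig xs i) (sig xs (Suc i))}"
  proof (intro set_eqI iffI)
    fix i assume "i \<in> {i\<in>{..<length xs + 2}. tD (sig xs (i - 1)) (sig xs i) (sig xs (Suc i))}"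
    then have i: "tD (sig xs (i - 1)) (sig xs i) (sig xs (Suc i))" by auto
    then have "1 \<le> i - 1" "i \<le> m" using sig_gt[OF xs_props(2), of i "i - 1"] sig_gt[OF xs_props(2), of "Suc i" i]
      xs_props unfolding tD_def by auto
    then show "i \<in> Suc ` {p \<in> {1..<m}. tD (sig xs p) (sig xs (Suc p)) (sig xs (Suc (Suc p)))}"
      using i by (intro image_eqI[of _ _ "i - 1"]) auto
  qed (use xs_props in auto)
  note E = this
  have inj: "inj_on Suc A" for A :: "nat set" by (simp add: inj_on_def)
  show ?thesis unfolding cnt_card E[symmetric] card_image[OF inj] ..
qed

lemma card_Vd: "card {p \<in> {1..<m}. tV (sig xs p) (sig xs (Suc p)) (sig xs (Suc (Suc p)))} = cnt tV xs"
proof -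
  have E: "Suc ` {p \<in> {1..<m}. tV (sig xs p) (sig xs (Suc p)) (sig xs (Suc (Suc p)))}
      = {i\<in>{..<length xs + 2}. tV (sig xs (i - 1)) (sig xs i) (sig xs (Suc i))}"
  proof (intro set_eqI iffI)
    fix i assume "i \<in> {i\<in>{..<length xs + 2}. tV (sig xs (i - 1)) (sig xs i) (sig xs (Suc i))}"
    then have i: "tV (sig xs (i - 1)) (sig xs i) (sig xs (Suc i))" by auto
    then have "1 \<le> i - 1" "Suc i \<le> m" using sig_gt[OF xs_props(2), of i "i - 1"] sig_gt[OF xs_props(2), of i "Suc i"]
      xs_props unfolding tV_def by auto
    then show "i \<in> Suc ` {p \<in> {1..<m}. tV (sig xs p) (sig xs (Suc p)) (sig xs (Suc (Suc p)))}"
      using i by (intro image_eqI[of _ _ "i - 1"]) auto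
  qed (use xs_props in auto)
  note E = this
  have inj: "inj_on Suc A" for A :: "nat set" by (simp add: inj_on_def)
  show ?thesis unfolding cnt_card E[symmetric] card_image[OF inj] ..
qed

lemma slot_sum:
  fixes u1 u2 u3 u4 a b :: "'b::comm_ring_1"
  assumes m1: "1 \<le> m"
  defines "K \<equiv> \<lambda>ys. M u1 u2 u3 u4 a b (cnt tV ys) (cnt tP ys) (cnt tD ys) (cnt tA ys) (LRmax ys) (RLmax ys)"
  shows "(\<Sum>p\<le>m. K (ins p xs)) = (a*u4 + b*u3) * K xs
     + ep (M (Dual u1 (u1*(u3+u4))) (Dual u2 0) (Dual u3 (u1*u2)) (Dual u4 (u1*u2)) (Dual a 0) (Dual b 0)
          (cnt tV xs) (cnt tP xs) (cnt tD xs) (cnt tA xs) (LRmax xs) (RLmax xs))"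
proof -
  note P = xs_props
  define V where "V = cnt tV xs"
  define W where "W = cnt tP xs"
  define D where "D = cnt tD xs"
  define A where "A = cnt tA xs"
  define L where "L = LRmax xs"
  define R where "R = RLmax xs"
  obtain W' where W': "W = Suc W'" using W_pos[OF xs m1] unfolding W_def by (cases "cnt tP xs") auto
  obtain L' where L': "L = Suc L'" using LR_pos[OF xs m1] unfolding L_def by (cases "LRmax xs") auto
  obtain R' where R': "R = Suc R'" using RL_pos[OF xs m1] unfolding R_def by (cases "RLmax xs") auto
  have Kx: "K xs = M u1 u2 u3 u4 a b V W D A L R" unfolding K_def V_def W_def D_def A_def L_def R_def ..
  have pm: "m \<le> length xs" "0 < length xs" using P m1 by auto
  have s0: "K (ins 0 xs) = a * u4 * K xs"
  proof -
    have "K (ins 0 xs) = M u1 u2 u3 u4 a b V W D (Suc A) (Suc L) R"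
      unfolding K_def using slot0[OF pm(2) P(2)] LRmax_ins[of 0 xs] RLmax_ins[of 0 xs] P m1
      by (simp add: V_def W_def D_def A_def L_def R_def)
    then show ?thesis unfolding Kx M_def L' by (simp add: algebra_simps)
  qed
  have sm: "K (ins m xs) = b * u3 * K xs"
  proof -
    have "K (ins m xs) = M u1 u2 u3 u4 a b V W (Suc D) A L (Suc R)"
      unfolding K_def using slotm[OF pm(2) P(2)] LRmax_ins[of m xs] RLmax_ins[of m xs] P m1
      by (simp add: V_def W_def D_def A_def L_def R_def)
    then show ?thesis unfolding Kx M_def R' by (simp add: algebra_simps)
  qed
  define e where "e = sig xs"
  define MA where "MA = M u1 u2 u3 u4 a b (Suc V) (Suc W) D (A - 1) L R"
  define MVa where "MVa = M u1 u2 u3 u4 a b V W (Suc D) A L R"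
  define MD where "MD = M u1 u2 u3 u4 a b (Suc V) (Suc W) (D - 1) A L R"
  define MVd where "MVd = M u1 u2 u3 u4 a b V W D (Suc A) L R"
  have sI: "K (ins p xs) = (if tA (e (p - 1)) (e p) (e (Suc p)) then MA else 0)
      + (if tV (e (p - 1)) (e p) (e (Suc p)) then MVa else 0)
      + (if tD (e p) (e (Suc p)) (e (Suc (Suc p))) then MD else 0)
      + (if tV (e p) (e (Suc p)) (e (Suc (Suc p))) then MVd else 0)" if p: "p \<in> {1..<m}" for p
  proof -
    have p1: "1 \<le> p" "p < length xs" using p P by auto
    have LR: "LRmax (ins p xs) = L" "RLmax (ins p xs) = R"
      using LRmax_ins[of p xs] RLmax_ins[of p xs] P p1 unfolding L_def R_def by auto
    note S = slotI[OF P(1,2) p1]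
    have ex: "tA (e (p - 1)) (e p) (e (Suc p)) \<or> tV (e (p - 1)) (e p) (e (Suc p)) \<or>
        tD (e p) (e (Suc p)) (e (Suc (Suc p))) \<or> tV (e p) (e (Suc p)) (e (Suc (Suc p)))"
      using S(5) unfolding e_def .
    then show ?thesis
    proof (elim disjE)
      assume h: "tA (e (p - 1)) (e p) (e (Suc p))"
      then have "\<not> tV (e (p - 1)) (e p) (e (Suc p))" "\<not> tD (e p) (e (Suc p)) (e (Suc (Suc p)))"
        "\<not> tV (e p) (e (Suc p)) (e (Suc (Suc p)))" by (auto simp: tA_def tV_def tD_def)
      moreover have "K (ins p xs) = MA"
      proof -
        have "cnt tA (ins p xs) = cnt tA xs - 1" using S(1) h unfolding e_def by auto
        then show ?thesis using S(1) h LR unfolding e_def K_def MA_def V_def W_def D_def A_def by simp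
      qed
      ultimately show ?thesis using h by simp
    next
      assume h: "tV (e (p - 1)) (e p) (e (Suc p))"
      then have "\<not> tA (e (p - 1)) (e p) (e (Suc p))" "\<not> tD (e p) (e (Suc p)) (e (Suc (Suc p)))"
        "\<not> tV (e p) (e (Suc p)) (e (Suc (Suc p)))" by (auto simp: tA_def tV_def tD_def)
      moreover have "K (ins p xs) = MVa"
        using S(2) h LR unfolding e_def K_def MVa_def V_def W_def D_def A_def by simp
      ultimately show ?thesis using h by simp
    next
      assume h: "tD (e p) (e (Suc p)) (e (Suc (Suc p)))"
      then have "\<not> tA (e (p - 1)) (e p) (e (Suc p))" "\<not> tV (e (p - 1)) (e p) (e (Suc p))"
        "\<not> tV (e p) (e (Suc p)) (e (Suc (Suc p)))" by (auto simp: tA_def tV_def tD_def)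
      moreover have "K (ins p xs) = MD"
      proof -
        have "cnt tD (ins p xs) = cnt tD xs - 1" using S(3) h unfolding e_def by auto
        then show ?thesis using S(3) h LR unfolding e_def K_def MD_def V_def W_def D_def A_def by simp
      qed
      ultimately show ?thesis using h by simp
    next
      assume h: "tV (e p) (e (Suc p)) (e (Suc (Suc p)))"
      then have "\<not> tA (e (p - 1)) (e p) (e (Suc p))" "\<not> tV (e (p - 1)) (e p) (e (Suc p))"
        "\<not> tD (e p) (e (Suc p)) (e (Suc (Suc p)))" by (auto simp: tA_def tV_def tD_def)
      moreover have "K (ins p xs) = MVd"
        using S(4) h LR unfolding e_def K_def MVd_def V_def W_def D_def A_def by simp
      ultimately show ?thesis using h by simp
    qed
  qed
  have split: "{..m} = insert 0 (insert m {1..<m})" using m1 by auto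
  have "(\<Sum>p\<le>m. K (ins p xs)) = K (ins 0 xs) + K (ins m xs) + (\<Sum>p\<in>{1..<m}. K (ins p xs))"
    unfolding split using m1 by simp
  also have "(\<Sum>p\<in>{1..<m}. K (ins p xs)) = of_nat A * MA + of_nat V * MVa + of_nat D * MD + of_nat V * MVd"
  proof -
    have "(\<Sum>p\<in>{1..<m}. K (ins p xs)) = (\<Sum>p\<in>{1..<m}. (if tA (e (p - 1)) (e p) (e (Suc p)) then MA else 0)
      + (if tV (e (p - 1)) (e p) (e (Suc p)) then MVa else 0)
      + (if tD (e p) (e (Suc p)) (e (Suc (Suc p))) then MD else 0)
      + (if tV (e p) (e (Suc p)) (e (Suc (Suc p))) then MVd else 0))"
      by (intro sum.cong refl sI)
    also have "\<dots> = of_nat A * MA + of_nat V * MVa + of_nat D * MD + of_nat V * MVd"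
      by (simp only: sum.distrib sum_if_const[OF finite_atLeastLessThan] e_def card_A card_Va card_D card_Vd
          A_def V_def D_def)
    finally show ?thesis .
  qed
  finally have lhs: "(\<Sum>p\<le>m. K (ins p xs)) = a * u4 * K xs + b * u3 * K xs
      + (of_nat A * MA + of_nat V * MVa + of_nat D * MD + of_nat V * MVd)" using s0 sm by simp
  have rhs: "ep (M (Dual u1 (u1*(u3+u4))) (Dual u2 0) (Dual u3 (u1*u2)) (Dual u4 (u1*u2)) (Dual a 0) (Dual b 0)
          (cnt tV xs) (cnt tP xs) (cnt tD xs) (cnt tA xs) (LRmax xs) (RLmax xs))
      = of_nat V * (u3 + u4) * K xs + of_nat D * MD + of_nat A * MA"
    unfolding Kx MD_def MA_def using ep_M[of W u1 u3 u4 u2 a b V D A L R] W'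
    by (simp add: V_def W_def D_def A_def L_def R_def)
  have "MVa = u3 * K xs" "MVd = u4 * K xs" unfolding MVa_def MVd_def Kx M_def by (simp_all add: algebra_simps)
  then show ?thesis unfolding lhs rhs by (simp add: algebra_simps)
qed


end

lemma ep_sum: "ep (sum f A) = (\<Sum>x\<in>A. ep (f x))"
  by (induction A rule: infinite_finite_induct) simp_all

lemma wt_M: "0 \<notin> set ys \<Longrightarrow> u1 ^ Vst ys * u2 ^ (Wst ys - 1) * u3 ^ rdd ys * u4 ^ lda ys
    * a ^ (LRmax ys - 1) * b ^ (RLmax ys - 1)
   = M u1 u2 u3 u4 a b (cnt tV ys) (cnt tP ys) (cnt tD ys) (cnt tA ys) (LRmax ys) (RLmax ys)"
  by (simp add: M_def Vst_cnt Wst_cnt rdd_cnt lda_cnt)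

lemma C1: fixes u1 u2 u3 u4 a b :: "'b::comm_ring_1"
  shows "Pn (Suc n) u1 u2 u3 u4 a b = (a*u4 + b*u3) * Pn n u1 u2 u3 u4 a b
    + ep (Pn n (Dual u1 (u1*(u3+u4))) (Dual u2 0) (Dual u3 (u1*u2)) (Dual u4 (u1*u2)) (Dual a 0) (Dual b 0))"
proof -
  define K where "K = (\<lambda>ys. M u1 u2 u3 u4 a b (cnt tV ys) (cnt tP ys) (cnt tD ys) (cnt tA ys) (LRmax ys) (RLmax ys))"
  have "Pn (Suc n) u1 u2 u3 u4 a b = (\<Sum>zs\<in>perms (Suc (Suc n)). K zs)"
    unfolding Pn_def K_def by (intro sum.cong refl wt_M) (use perms_props in auto)
  also have "\<dots> = (\<Sum>xs\<in>perms (Suc n). \<Sum>p\<le>Suc n. K (ins p xs))" by (rule sum_perms_Suc)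
  also have "\<dots> = (\<Sum>xs\<in>perms (Suc n). (a*u4 + b*u3) * K xs
     + ep (M (Dual u1 (u1*(u3+u4))) (Dual u2 0) (Dual u3 (u1*u2)) (Dual u4 (u1*u2)) (Dual a 0) (Dual b 0)
          (cnt tV xs) (cnt tP xs) (cnt tD xs) (cnt tA xs) (LRmax xs) (RLmax xs)))"
    unfolding K_def by (intro sum.cong refl slot_sum) auto
  also have "\<dots> = (a*u4 + b*u3) * Pn n u1 u2 u3 u4 a b
    + ep (Pn n (Dual u1 (u1*(u3+u4))) (Dual u2 0) (Dual u3 (u1*u2)) (Dual u4 (u1*u2)) (Dual a 0) (Dual b 0))"
  proof -
    have "Pn n u1 u2 u3 u4 a b = (\<Sum>xs\<in>perms (Suc n). K xs)"
      unfolding Pn_def K_def by (intro sum.cong refl wt_M) (use perms_props in auto)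
    moreover have "Pn n (Dual u1 (u1*(u3+u4))) (Dual u2 0) (Dual u3 (u1*u2)) (Dual u4 (u1*u2)) (Dual a 0) (Dual b 0)
       = (\<Sum>xs\<in>perms (Suc n). M (Dual u1 (u1*(u3+u4))) (Dual u2 0) (Dual u3 (u1*u2)) (Dual u4 (u1*u2)) (Dual a 0) (Dual b 0)
          (cnt tV xs) (cnt tP xs) (cnt tD xs) (cnt tA xs) (LRmax xs) (RLmax xs))"
      unfolding Pn_def by (intro sum.cong refl wt_M) (use perms_props in auto)
    ultimately show ?thesis by (simp add: sum.distrib sum_distrib_left ep_sum)
  qed
  finally show ?thesis .
qed


lemma re_of_nat [simp]: "re (of_nat k) = of_nat k" and ep_of_nat [simp]: "ep (of_nat k) = 0"
  by (induction k) simp_all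
lemma re_numeral [simp]: "re (numeral k) = numeral k" and ep_numeral [simp]: "ep (numeral k) = 0"
  using re_of_nat[of "numeral k"] ep_of_nat[of "numeral k"] by simp_all

lemma generic:
  fixes al u2 :: "'a::comm_ring_1"
  defines "s \<equiv> X3 + X4" and "q \<equiv> X1 * cc u2" and "r \<equiv> (cc (-1-al) - cc al) * (X3 - X4)"
    and "D \<equiv> (X3 + X4)^2 - 4*(X1 * cc u2)"
  shows "2^n * Pn n X1 (cc u2) X3 X4 (cc al) (cc (-1-al)) = Aa n r D - s * Bb n r D"
proof (induction n)
  case 0 then show ?case by (simp add: P0)
next
  case (Suc n)
  define \<sigma> where "\<sigma> = evh (\<lambda>a. Dual (cc a) 0) (Dual X1 (X1*s)) (Dual X3 q) (Dual X4 q)"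
  have h: "hom \<sigma>" unfolding \<sigma>_def
    by (intro hom_evh hom_comp[OF hom_Dual hom_cc])
  have hk: "hom (\<lambda>a. Dual (cc a) 0)" by (intro hom_comp[OF hom_Dual hom_cc])
  have sv1: "\<sigma> X1 = Dual X1 (X1*s)" "\<sigma> X3 = Dual X3 q" "\<sigma> X4 = Dual X4 q"
    by (simp_all add: \<sigma>_def evh_vals[OF hk])
  have sv2: "\<sigma> (cc a) = Dual (cc a) 0" for a
    by (simp_all add: \<sigma>_def evh_vals[OF hk])
  note sv = sv1 sv2
  have sr: "\<sigma> r = Dual r 0"
    unfolding r_def by (rule dual.expand) (simp add: hom_simps[OF h] sv)
  have sD: "\<sigma> D = Dual D 0"
    unfolding D_def by (rule dual.expand) (simp add: hom_simps[OF h] sv s_def q_def algebra_simps power2_eq_square)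
  have ss: "\<sigma> s = Dual s (2*q)"
    unfolding s_def by (rule dual.expand) (simp add: hom_simps[OF h] sv s_def q_def)
  have L: "\<sigma> (2^n * Pn n X1 (cc u2) X3 X4 (cc al) (cc (-1-al))) = 2^n * Pn n (Dual X1 (X1*(X3+X4))) (Dual (cc u2) 0) (Dual X3 (X1 * cc u2)) (Dual X4 (X1 * cc u2)) (Dual (cc al) 0) (Dual (cc (-1-al)) 0)"
    by (simp only: hom_mult[OF h] hom_power[OF h] hom_numeral[OF h] hom_Pn[OF h] sv s_def q_def)
  have R: "\<sigma> (Aa n r D - s * Bb n r D) = Aa n (Dual r 0) (Dual D 0) - Dual s (2*q) * Bb n (Dual r 0) (Dual D 0)"
    by (simp only: hom_diff[OF h] hom_mult[OF h] hom_Aa[OF h] hom_Bb[OF h] sr sD ss)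
  have "2^n * Pn n (Dual X1 (X1*(X3+X4))) (Dual (cc u2) 0) (Dual X3 (X1 * cc u2)) (Dual X4 (X1 * cc u2)) (Dual (cc al) 0) (Dual (cc (-1-al)) 0)
      = Aa n (Dual r 0) (Dual D 0) - Dual s (2*q) * Bb n (Dual r 0) (Dual D 0)"
    using Suc L R by metis
  also have "\<dots> = Dual (Aa n r D) 0 - Dual s (2*q) * Dual (Bb n r D) 0"
    by (simp add: hom_Aa[OF hom_Dual, symmetric] hom_Bb[OF hom_Dual, symmetric])
  finally have E: "2^n * ep (Pn n (Dual X1 (X1*(X3+X4))) (Dual (cc u2) 0) (Dual X3 (X1 * cc u2)) (Dual X4 (X1 * cc u2)) (Dual (cc al) 0) (Dual (cc (-1-al)) 0))
      = - (2 * q * Bb n r D)"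
    by (drule_tac f=ep in arg_cong) simp
  have sum1: "cc al + cc (-1-al) = (-1 :: 'a poly poly poly)"
    by (simp add: hom_simps[OF hom_cc, symmetric])
  have key: "2 * (cc al * X4 + cc (-1-al) * X3) = r - s"
  proof -
    have e: "cc (-1-al) = - 1 - cc al" using sum1 by (simp add: algebra_simps eq_diff_eq)
    show ?thesis unfolding r_def s_def e by (simp add: algebra_simps)
  qed
  have "2 ^ Suc n * Pn (Suc n) X1 (cc u2) X3 X4 (cc al) (cc (-1-al))
      = (2 * (cc al * X4 + cc (-1-al) * X3)) * (2^n * Pn n X1 (cc u2) X3 X4 (cc al) (cc (-1-al)))
        + 2 * (2^n * ep (Pn n (Dual X1 (X1*(X3+X4))) (Dual (cc u2) 0) (Dual X3 (X1 * cc u2)) (Dual X4 (X1 * cc u2)) (Dual (cc al) 0) (Dual (cc (-1-al)) 0)))"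
    by (simp add: C1 algebra_simps)
  also have "\<dots> = (r - s) * (Aa n r D - s * Bb n r D) - 4 * q * Bb n r D"
    unfolding key E Suc by simp
  also have "\<dots> = Aa (Suc n) r D - s * Bb (Suc n) r D"
    unfolding Aa_Suc Bb_Suc D_def s_def q_def by (simp add: algebra_simps power2_eq_square)
  finally show ?case .
qed

lemma closed_form:
  fixes u1 u2 u3 u4 al be :: "'a::comm_ring_1"
  assumes "al + be = -1"
  shows "2^n * Pn n u1 u2 u3 u4 al be = Aa n ((be - al) * (u3 - u4)) ((u3+u4)^2 - 4*u1*u2)
     - (u3+u4) * Bb n ((be - al) * (u3 - u4)) ((u3+u4)^2 - 4*u1*u2)"
proof -
  define ev where "ev = evh (\<lambda>x. x) u1 u3 u4"
  have h: "hom ev" unfolding ev_def by (intro hom_evh hom_id)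
  have ev1: "ev X1 = u1" "ev X3 = u3" "ev X4 = u4"
    by (simp_all add: ev_def evh_vals[OF hom_id])
  have ev2: "ev (cc a) = a" for a
    by (simp_all add: ev_def evh_vals[OF hom_id])
  note ev = ev1 ev2
  have be: "be = -1 - al" using assms by (simp add: algebra_simps eq_diff_eq)
  have "ev (2^n * Pn n X1 (cc u2) X3 X4 (cc al) (cc (-1-al))) = ev (Aa n ((cc (-1-al) - cc al) * (X3 - X4)) ((X3 + X4)^2 - 4*(X1 * cc u2))
      - (X3 + X4) * Bb n ((cc (-1-al) - cc al) * (X3 - X4)) ((X3 + X4)^2 - 4*(X1 * cc u2)))"
    using generic[of n u2 al] by simp
  then show ?thesis
    by (simp add: hom_simps[OF h] hom_Pn[OF h] hom_Aa[OF h] hom_Bb[OF h] ev be mult.assoc)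
qed



lemma even_sum: fixes F :: "nat \<Rightarrow> 'b::comm_monoid_add" and n :: nat shows "(\<Sum>j\<le>n. if even j then F j else 0) = (\<Sum>k=0..n div 2. F (2*k))"
proof -
  have "(\<Sum>k=0..n div 2. F (2*k)) = sum F ((\<lambda>k. 2*k) ` {0..n div 2})"
    by (simp add: sum.reindex inj_on_def)
  also have "(\<lambda>k. 2*k) ` {0..n div 2} = {j \<in> {..n}. even j}"
    by (auto elim!: evenE)
  also have "sum F {j \<in> {..n}. even j} = (\<Sum>j\<le>n. if even j then F j else 0)"
    by (rule sum.inter_filter) simp
  finally show ?thesis by simp
qed

lemma odd_sum: fixes F :: "nat \<Rightarrow> 'b::comm_monoid_add" and n :: nat shows "(\<Sum>j\<le>Suc n. if odd j then F j else 0) = (\<Sum>k=0..n div 2. F (2*k+1))"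
proof -
  have "(\<Sum>k=0..n div 2. F (2*k+1)) = sum F ((\<lambda>k. 2*k+1) ` {0..n div 2})"
    by (simp add: sum.reindex inj_on_def)
  also have "(\<lambda>k. 2*k+1) ` {0..n div 2} = {j \<in> {..Suc n}. odd j}"
    by (auto elim!: oddE)
  also have "sum F {j \<in> {..Suc n}. odd j} = (\<Sum>j\<le>Suc n. if odd j then F j else 0)"
    by (rule sum.inter_filter) simp
  finally show ?thesis by simp
qed

lemma Aa_explicit: "Aa n ((be - al) * (u3 - u4)) D =
   (\<Sum>k = 0..n div 2. of_nat (n choose (2*k)) * D ^ k * (be - al) ^ (n - 2*k) * (u3 - u4) ^ (n - 2*k))"
proof -
  have "Aa n ((be - al) * (u3 - u4)) D = (\<Sum>j\<le>n. if even j then of_nat (n choose j) * (D ^ (j div 2) * ((be - al) * (u3 - u4)) ^ (n - j)) else 0)"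
    unfolding Aa_def by (rule sum.cong) auto
  also have "\<dots> = (\<Sum>k = 0..n div 2. of_nat (n choose (2*k)) * (D ^ (2 * k div 2) * ((be - al) * (u3 - u4)) ^ (n - 2*k)))"
    by (rule even_sum)
  finally show ?thesis by (simp add: power_mult_distrib mult.assoc)
qed

lemma Bb_explicit: "Bb n ((be - al) * (u3 - u4)) D =
   (\<Sum>k = 0..n div 2. of_nat (n choose (2*k+1)) * D ^ k * (be - al) ^ (n - 2*k - 1) * (u3 - u4) ^ (n - 2*k - 1))"
proof -
  have "Bb n ((be - al) * (u3 - u4)) D = (\<Sum>j\<le>Suc n. if odd j then of_nat (n choose j) * (D ^ (j div 2) * ((be - al) * (u3 - u4)) ^ (n - j)) else 0)"
    unfolding Bb_def by (simp add: binomial_eq_0) (rule sum.cong, auto)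
  also have "\<dots> = (\<Sum>k = 0..n div 2. of_nat (n choose (2*k+1)) * (D ^ ((2 * k + 1) div 2) * ((be - al) * (u3 - u4)) ^ (n - (2*k+1))))"
    by (rule odd_sum)
  finally show ?thesis by (simp add: power_mult_distrib mult.assoc)
qed

theorem theorem5p1:
  fixes u1 u2 u3 u4 \<alpha> \<beta> :: "'a::comm_ring_1" and n :: nat
  assumes "\<alpha> + \<beta> = -1" and "n \<ge> 1"
  shows "2 ^ n * Pn n u1 u2 u3 u4 \<alpha> \<beta> =
    (let \<Delta> = (u3 + u4)^2 - 4 * u1 * u2 in
     (\<Sum>k = 0..n div 2. of_nat (n choose (2*k)) * \<Delta> ^ k * (\<beta> - \<alpha>) ^ (n - 2*k) * (u3 - u4) ^ (n - 2*k))
     - (u3 + u4) * (\<Sum>k = 0..n div 2. of_nat (n choose (2*k+1)) * \<Delta> ^ k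
            * (\<beta> - \<alpha>) ^ (n - 2*k - 1) * (u3 - u4) ^ (n - 2*k - 1)))"
  using closed_form[OF assms(1), of n u1 u2 u3 u4]
  by (simp add: Let_def Aa_explicit Bb_explicit)


end
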